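(* Suppose that $\theta\in(0,1]$, $M>1$, $T>1$, $n\ge 2M$ and $f\in\mathrm{PL}_n^2\cap G_M^2$. Then for any $k\in\{\lceil\sqrt n\rceil,\dots,\lfloor\theta n\rfloor-1\}$, \[\sum_{j=k}^{\lfloor\theta n\rfloor-1}\mathcal E^+_X(I_j,\Gamma_{M,T}(f,n),T)\ge\int_{k/n}^{\lfloor\theta n\rfloor/n}\Big(\sqrt{2R^*_X(f(s))}-\sqrt{f_X'(s)}\Big)^2ds-O\Big(\frac{M^4}{n^{1/4}}+\frac{M^3n}{T^{1/2}}\Big).\]
   Context: $O(a)$ denotes a quantity bounded in absolute value by $Ca$ for a universal constant $C$. Let $R(x,y)=\frac{x+1}{y+1}\vee\frac{y+1}{x+1}$, $P(x,y)=\frac{y+1}{2(x+1)}\mathbb 1_{x\ge y}+\big(1-\frac{x+1}{2(y+1)}\big)\mathbb 1_{x<y}$, $R_X=RP$, $R_Y=R(1-P)$. $R^*(x,y)=\frac xy\vee\frac yx$ if $x>0$ or $y>0$, $R^*(0,0)=1$; $P^*(x,y)=\frac y{2x}\mathbb 1_{x\ge y}+(1-\frac x{2y})\mathbb 1_{x<y}$ if $x>0$ or $y>0$, $P^*(0,0)=1/2$; $R^*_X=R^*P^*$ if $y>0$, $R^*_X(x,0)=1/2$. $\|\cdot\|$ is the max norm on $\mathbb R^2$. $E$ is the set of non-decreasing càdlàg $f:[0,1]\to\mathbb R$ with $f(0)=0$ ($f'(s):=\infty$ where not differentiable), with Lévy metric $d(f,g)=\inf\{r>0:f(x-r)-r<g(x)<f(x+r)+r\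 \forall x\in[-r,1+r]\}$ ($f(x)=f(0)$ for $x<0$, $f(1)$ for $x>1$), and on $E^2$ the max of coordinate distances; $f=(f_X,f_Y)$. $G_M=\{f\in E: s/M\le f(s)\le Ms\ \forall s\}$; $G_{M,T}=\{f\in E:s/M-2T^{-2/3}\le f(s)\le M(s+2T^{-2/3})\ \forall s\}$. $\mathrm{PL}_n$ is the set of continuous $f\in E$ linear on each $[i/n,(i+1)/n]$. $I_j=[j/n,(j+1)/n]$. $\Delta_n(f,g)=\max_{0\le i\le n}\|f(i/n)-g(i/n)\|$; $\Gamma_{M,T}(f,n)=B_{\Delta_n}(f,1/n^2)\cap B_d(f,1/n)\cap G_{M,T}^2$ (open balls). For a non-empty interval $I\subset[0,1]$ with infimum $I^-$, supremum $I^+$, length $|I|$, $F\subset E^2$, $T\ge1$: $R^-_X(I,F,T)=\inf\{R_X(Tg(s)):s\in I,g\in F\}$, $R^+_X(I,F,T)$ the corresponding sup; $x^-(s,F)=\inf\{g_X(s):g\in F\}$, $x^+(s,F)=\sup\{g_X(s):g\in F\}$. "$X-$ case": $2R^-_X|I|>x^+(I^+,F)-x^-(I^-,F)$; "$X+$ case": $x^-(I^+,F)-x^+(I^-,F)>2R^+_X|I|$. $\mathcal E^+_X(I,F,T)=(\sqrt{2R^-_X(I,F,T)|I|}-\sqrt{x^+(I^+,F)-x^-(I^-,F)})^2$ in the $X-$ case, $(\sqrt{2R^+_X(I,F,T)|I|}-\sqrt{x^-(I^+,F)-x^+(I^-,F)})^2$ in the $X+$ case, $0$ otherwise. *)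

theory Defs
  imports "HOL-Analysis.Analysis"
begin

type_synonym path2 = "(real \<Rightarrow> real) \<times> (real \<Rightarrow> real)"

definition Rf :: "real \<Rightarrow> real \<Rightarrow> real" where
  "Rf x y = max ((x+1)/(y+1)) ((y+1)/(x+1))"

definition Pf :: "real \<Rightarrow> real \<Rightarrow> real" where
  "Pf x y = (if x \<ge> y then (y+1)/(2*(x+1)) else 1 - (x+1)/(2*(y+1)))"

definition RX :: "real \<Rightarrow> real \<Rightarrow> real" where
  "RX x y = Rf x y * Pf x y"

definition Rstar :: "real \<Rightarrow> real \<Rightarrow> real" where
  "Rstar x y = (if x > 0 \<or> y > 0 then max (x/y) (y/x) else 1)"

definition Pstar :: "real \<Rightarrow> real \<Rightarrow> real" where
  "Pstar x y = (if x > 0 \<or> y > 0 then (if x \<ge> y then y/(2*x) else 1 - x/(2*y)) else 1/2)"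

definition RstarX :: "real \<Rightarrow> real \<Rightarrow> real" where
  "RstarX x y = (if y > 0 then Rstar x y * Pstar x y else 1/2)"

text \<open>The space E: non-decreasing cadlag functions on [0,1] with f 0 = 0, represented
  by their canonical extension to the real line (constant f 0 left of 0, f 1 right of 1).\<close>
definition E :: "(real \<Rightarrow> real) set" where
  "E = {f. f 0 = 0 \<and> mono_on {0..1} f
          \<and> (\<forall>x. x < 0 \<longrightarrow> f x = f 0) \<and> (\<forall>x. x > 1 \<longrightarrow> f x = f 1)
          \<and> (\<forall>x\<in>{0..<1}. continuous (at_right x) f)
          \<and> (\<forall>x\<in>{0<..1}. \<exists>l. (f \<longlongrightarrow> l) (at_left x))}"

definition levy :: "(real \<Rightarrow> real) \<Rightarrow> (real \<Rightarrow> real) \<Rightarrow> real" where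
  "levy f g = Inf {r. r > 0 \<and> (\<forall>x\<in>{-r..1+r}. f (x - r) - r < g x \<and> g x < f (x + r) + r)}"

definition levy2 :: "path2 \<Rightarrow> path2 \<Rightarrow> real" where
  "levy2 f g = max (levy (fst f) (fst g)) (levy (snd f) (snd g))"

definition G :: "real \<Rightarrow> (real \<Rightarrow> real) set" where
  "G M = {f \<in> E. \<forall>s\<in>{0..1}. s / M \<le> f s \<and> f s \<le> M * s}"

definition GT :: "real \<Rightarrow> real \<Rightarrow> (real \<Rightarrow> real) set" where
  "GT M T = {f \<in> E. \<forall>s\<in>{0..1}. s / M - 2 * T powr (-2/3) \<le> f s
                                  \<and> f s \<le> M * (s + 2 * T powr (-2/3))}"

definition PL :: "nat \<Rightarrow> (real \<Rightarrow> real) set" where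
  "PL n = {f \<in> E. continuous_on {0..1} f \<and>
             (\<forall>i<n. \<exists>a b. \<forall>x\<in>{real i / n .. (real i + 1) / n}. f x = a + b * x)}"

definition Ij :: "nat \<Rightarrow> nat \<Rightarrow> real set" where
  "Ij n j = {real j / n .. (real j + 1) / n}"

definition Delta :: "nat \<Rightarrow> path2 \<Rightarrow> path2 \<Rightarrow> real" where
  "Delta n f g = Max ((\<lambda>i. max \<bar>fst f (real i / n) - fst g (real i / n)\<bar>
                                \<bar>snd f (real i / n) - snd g (real i / n)\<bar>) ` {0..n})"

definition Gamma :: "real \<Rightarrow> real \<Rightarrow> path2 \<Rightarrow> nat \<Rightarrow> path2 set" where
  "Gamma M T f n = {g. Delta n f g < 1 / (real n)^2 \<and> levy2 f g < 1 / real n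
                       \<and> g \<in> GT M T \<times> GT M T}"

definition RXminus :: "real set \<Rightarrow> path2 set \<Rightarrow> real \<Rightarrow> real" where
  "RXminus I F T = Inf {RX (T * fst g s) (T * snd g s) | s g. s \<in> I \<and> g \<in> F}"

definition RXplus :: "real set \<Rightarrow> path2 set \<Rightarrow> real \<Rightarrow> real" where
  "RXplus I F T = Sup {RX (T * fst g s) (T * snd g s) | s g. s \<in> I \<and> g \<in> F}"

definition xminus :: "real \<Rightarrow> path2 set \<Rightarrow> real" where
  "xminus s F = Inf {fst g s | g. g \<in> F}"

definition xplus :: "real \<Rightarrow> path2 set \<Rightarrow> real" where
  "xplus s F = Sup {fst g s | g. g \<in> F}"

definition EplusX :: "real set \<Rightarrow> path2 set \<Rightarrow> real \<Rightarrow> real" where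
  "EplusX I F T =
    (let a = Inf I; b = Sup I; L = b - a in
     if 2 * RXminus I F T * L > xplus b F - xminus a F
       then (sqrt (2 * RXminus I F T * L) - sqrt (xplus b F - xminus a F))^2
     else if xminus b F - xplus a F > 2 * RXplus I F T * L
       then (sqrt (2 * RXplus I F T * L) - sqrt (xminus b F - xplus a F))^2
     else 0)"

text \<open>Derivative; at the (Lebesgue-null) set of non-differentiability points the paper
  uses the value infinity, here we use 0 (does not affect the integral).\<close>
definition dX :: "(real \<Rightarrow> real) \<Rightarrow> real \<Rightarrow> real" where
  "dX f s = (if f differentiable (at s) then deriv f s else 0)"

end

theory Submission
  imports Defs
begin



lemma RX_formula:
  assumes "X > -1" "Y > -1"
  shows "RX X Y = max (1/2) ((Y+1)/(X+1) - 1/2)"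
proof -
  have p: "X+1>0" "Y+1>0" using assms by auto
  show ?thesis
  proof (cases "X \<ge> Y")
    case True
    have a: "(Y+1)/(X+1) \<le> 1" using p True by simp
    moreover have b: "(X+1)/(Y+1) \<ge> 1" using p True by simp
    ultimately have R: "Rf X Y = (X+1)/(Y+1)" unfolding Rf_def by simp
    have P: "Pf X Y = (Y+1)/(2*(X+1))" using True unfolding Pf_def by simp
    have "RX X Y = 1/2" unfolding RX_def R P using p by simp
    then show ?thesis using a by simp
  next
    case False
    have a: "(Y+1)/(X+1) \<ge> 1" using p False by simp
    moreover have b: "(X+1)/(Y+1) \<le> 1" using p False by simp
    ultimately have R: "Rf X Y = (Y+1)/(X+1)" unfolding Rf_def by simp
    have P: "Pf X Y = 1 - (X+1)/(2*(Y+1))" using False unfolding Pf_def by simp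
    have "(Y+1)/(X+1) * ((X+1)/(2*(Y+1))) = 1/2" using p by simp
    then have "RX X Y = (Y+1)/(X+1) - 1/2" unfolding RX_def R P by (simp add: right_diff_distrib)
    then show ?thesis using a by simp
  qed
qed

lemma RstarX_formula:
  assumes "x > 0" "y > 0"
  shows "RstarX x y = max (1/2) (y/x - 1/2)"
proof (cases "x \<ge> y")
  case True
  have a: "y/x \<le> 1" "x/y \<ge> 1" using assms True by auto
  then have "max (x/y) (y/x) = x/y" by simp
  then have R: "Rstar x y = x/y" unfolding Rstar_def using assms by simp
  have P: "Pstar x y = y/(2*x)" unfolding Pstar_def using assms True by simp
  have "RstarX x y = 1/2" unfolding RstarX_def R P using assms by simp
  then show ?thesis using a by simp
next
  case False
  have a: "y/x \<ge> 1" "x/y \<le> 1" using assms False by auto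
  then have "max (x/y) (y/x) = y/x" by simp
  then have R: "Rstar x y = y/x" unfolding Rstar_def using assms by simp
  have P: "Pstar x y = 1 - x/(2*y)" unfolding Pstar_def using assms False by simp
  have "y/x * (x/(2*y)) = 1/2" using assms by simp
  then have "RstarX x y = y/x - 1/2" unfolding RstarX_def R P using assms by (simp add: right_diff_distrib)
  then show ?thesis using a by simp
qed

lemma sqrt3_le: "a \<ge> 0 \<Longrightarrow> b \<ge> 0 \<Longrightarrow> c \<ge> 0 \<Longrightarrow> sqrt (a+b+c) \<le> sqrt a + sqrt b + sqrt c"
proof -
  assume h: "a \<ge> 0" "b \<ge> 0" "c \<ge> 0"
  have "sqrt (a+b+c) \<le> sqrt (a+b) + sqrt c" using h by (simp add: sqrt_add_le_add_sqrt)
  also have "sqrt (a+b) \<le> sqrt a + sqrt b" using h by (simp add: sqrt_add_le_add_sqrt)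
  finally show ?thesis by simp
qed

lemma phi_bound:
  fixes x y x1 y1 :: real
  assumes "x \<ge> 0" "y \<ge> 0" "x1 \<ge> 0" "y1 \<ge> 0"
  shows "(sqrt x - sqrt y)^2 \<le> (sqrt x1 - sqrt y1)^2 + \<bar>x-x1\<bar> + \<bar>y-y1\<bar>
          + 2 * sqrt(x*\<bar>y-y1\<bar>) + 2 * sqrt(y1*\<bar>x-x1\<bar>)"
proof -
  have e1: "(sqrt x - sqrt y)^2 = x + y - 2 * sqrt(x*y)" using assms
    by (simp add: power2_diff real_sqrt_mult)
  have e2: "(sqrt x1 - sqrt y1)^2 = x1 + y1 - 2 * sqrt(x1*y1)" using assms
    by (simp add: power2_diff real_sqrt_mult)
  have "x1*y1 = x*y + x*(y1-y) + y1*(x1-x)" by (simp add: algebra_simps)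
  also have "\<dots> \<le> x*y + x*\<bar>y-y1\<bar> + y1*\<bar>x-x1\<bar>"
    using assms by (intro add_mono mult_left_mono) auto
  finally have "sqrt(x1*y1) \<le> sqrt (x*y + x*\<bar>y-y1\<bar> + y1*\<bar>x-x1\<bar>)" by simp
  also have "\<dots> \<le> sqrt(x*y) + sqrt(x*\<bar>y-y1\<bar>) + sqrt (y1*\<bar>x-x1\<bar>)"
    using assms by (intro sqrt3_le) auto
  finally have "sqrt(x1*y1) \<le> sqrt(x*y) + sqrt(x*\<bar>y-y1\<bar>) + sqrt (y1*\<bar>x-x1\<bar>)" .
  then show ?thesis unfolding e1 e2 by linarith
qed

lemma EplusX_nonneg: "EplusX I F T \<ge> 0"
  unfolding EplusX_def Let_def by auto

lemma EplusX_repr: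
  fixes u v :: real and F :: "path2 set"
  assumes uv: "u < v"
    and defs: "rm = RXminus {u..v} F T" "rp = RXplus {u..v} F T"
       "A = xplus v F - xminus u F" "B = xminus v F - xplus u F"
    and r: "0 \<le> rm" "rm \<le> rp"
    and x: "B \<le> A" "0 \<le> A"
  shows "\<exists>x1 y1. EplusX {u..v} F T = (sqrt x1 - sqrt y1)^2
     \<and> 2 * rm * (v-u) \<le> x1 \<and> x1 \<le> 2 * rp * (v-u)
     \<and> B \<le> y1 \<and> y1 \<le> A \<and> 0 \<le> y1"
proof -
  have I: "Inf {u..v} = u" "Sup {u..v} = v" using uv by auto
  have Ed: "EplusX {u..v} F T = (if 2*rm*(v-u) > A then (sqrt (2*rm*(v-u)) - sqrt A)^2
      else if B > 2*rp*(v-u) then (sqrt (2*rp*(v-u)) - sqrt B)^2 else 0)"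
    unfolding EplusX_def Let_def I defs by simp
  have L: "v - u > 0" using uv by simp
  have rmL: "2*rm*(v-u) \<le> 2*rp*(v-u)" "0 \<le> 2*rm*(v-u)" using r L
    by (auto intro: mult_right_mono)
  show ?thesis
  proof (cases "2*rm*(v-u) > A")
    case True
    then have "EplusX {u..v} F T = (sqrt (2*rm*(v-u)) - sqrt A)^2" using Ed by simp
    moreover have "2 * rm * (v-u) \<le> 2 * rm * (v-u)" "A \<le> A" by simp_all
    ultimately show ?thesis using rmL x True
      by (intro exI[of _ "2*rm*(v-u)"] exI[of _ A] conjI) (assumption | linarith)+
  next
    case F1: False
    show ?thesis
    proof (cases "B > 2*rp*(v-u)")
      case True
      then have "EplusX {u..v} F T = (sqrt (2*rp*(v-u)) - sqrt B)^2" using Ed F1 by simp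
      moreover have "0 \<le> B" using True rmL by linarith
      moreover have "B \<le> B" by simp
      ultimately show ?thesis using rmL x True
        by (intro exI[of _ "2*rp*(v-u)"] exI[of _ B] conjI) (assumption | linarith)+
    next
      case False
      then have e: "EplusX {u..v} F T = 0" using Ed F1 by simp
      define z where "z = max (2*rm*(v-u)) B"
      have "EplusX {u..v} F T = (sqrt z - sqrt z)^2" using e by simp
      moreover have "2 * rm * (v-u) \<le> z" unfolding z_def by (rule max.cobounded1)
      moreover have "B \<le> z" unfolding z_def by (rule max.cobounded2)
      moreover have "z \<le> 2 * rp * (v-u)" using rmL(1) False unfolding z_def not_less by (rule max.boundedI)
      moreover have "z \<le> A" using F1 x(1) unfolding z_def not_less by (rule max.boundedI)
      moreover have "0 \<le> z" using rmL(2) calculation(2) by linarith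
      ultimately show ?thesis
        by (intro exI[of _ z] exI[of _ z] conjI) assumption+
    qed
  qed
qed



lemma E_mono:
  assumes "f \<in> E" "x \<le> y"
  shows "f x \<le> f y"
proof -
  have m: "mono_on {0..1} f" and l: "\<And>x. x < 0 \<Longrightarrow> f x = f 0" and r: "\<And>x. x > 1 \<Longrightarrow> f x = f 1"
    using assms(1) unfolding E_def mem_Collect_eq by blast+
  define cl where "cl = (\<lambda>t::real. max 0 (min 1 t))"
  have fc: "f t = f (cl t)" for t
  proof -
    consider "t < 0" | "t > 1" | "0 \<le> t \<and> t \<le> 1" by linarith
    then show ?thesis
    proof cases
      case 1 then show ?thesis using l unfolding cl_def by simp
    next
      case 2 then show ?thesis using r unfolding cl_def by simp
    next
      case 3 then show ?thesis unfolding cl_def by simp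
    qed
  qed
  have "cl x \<le> cl y" "cl x \<in> {0..1}" "cl y \<in> {0..1}" using assms(2) unfolding cl_def by auto
  then have "f (cl x) \<le> f (cl y)" using m by (meson mono_onD)
  then show ?thesis using fc by metis
qed

lemma Delta_ge:
  assumes "i \<le> n"
  shows "\<bar>fst f (real i / n) - fst g (real i / n)\<bar> \<le> Delta n f g"
    "\<bar>snd f (real i / n) - snd g (real i / n)\<bar> \<le> Delta n f g"
proof -
  let ?h = "\<lambda>i. max \<bar>fst f (real i / n) - fst g (real i / n)\<bar>
                                \<bar>snd f (real i / n) - snd g (real i / n)\<bar>"
  have "?h i \<le> Delta n f g" unfolding Delta_def
  proof (rule Max_ge)
    show "finite (?h ` {0..n})" by simp
    show "?h i \<in> ?h ` {0..n}" using assms by (intro imageI) simp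
  qed
  then show "\<bar>fst f (real i / n) - fst g (real i / n)\<bar> \<le> Delta n f g"
    "\<bar>snd f (real i / n) - snd g (real i / n)\<bar> \<le> Delta n f g" by linarith+
qed

lemma Gamma_grid:
  assumes "g \<in> Gamma M T f n" "i \<le> n"
  shows "\<bar>fst f (real i / n) - fst g (real i / n)\<bar> < 1 / (real n)^2"
    "\<bar>snd f (real i / n) - snd g (real i / n)\<bar> < 1 / (real n)^2"
  using Delta_ge[OF assms(2), of f g] assms(1) unfolding Gamma_def by auto

lemma Gamma_E:
  assumes "g \<in> Gamma M T f n"
  shows "fst g \<in> E" "snd g \<in> E"
  using assms unfolding Gamma_def GT_def by auto

lemma levy_self:
  assumes "f \<in> E" "r > 0"
  shows "levy f f \<le> r"
proof -
  let ?S = "{r. r > 0 \<and> (\<forall>x\<in>{-r..1+r}. f (x - r) - r < f x \<and> f x < f (x + r) + r)}"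
  have "r \<in> ?S"
  proof -
    have "f (x - r) - r < f x \<and> f x < f (x + r) + r" for x
    proof -
      have "f (x - r) \<le> f x" "f x \<le> f (x + r)" using E_mono[OF assms(1)] assms(2) by auto
      then show ?thesis using assms(2) by linarith
    qed
    then show ?thesis using assms(2) by auto
  qed
  moreover have "bdd_below ?S" by (rule bdd_belowI[of _ 0]) auto
  ultimately show ?thesis unfolding levy_def by (rule cInf_lower)
qed

lemma Delta_self: "n > 0 \<Longrightarrow> Delta n f f = 0"
proof -
  assume "n > 0"
  have "(\<lambda>i. max \<bar>fst f (real i / real n) - fst f (real i / real n)\<bar>
       \<bar>snd f (real i / real n) - snd f (real i / real n)\<bar>) ` {0..n} = {0}" by auto
  then show ?thesis unfolding Delta_def by simp
qed

lemma G_GT: "M > 0 \<Longrightarrow> T > 0 \<Longrightarrow> G M \<subseteq> GT M T"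
proof
  fix h assume M: "M > 0" and T: "T > 0" and h: "h \<in> G M"
  have p: "0 \<le> T powr (-2/3)" by simp
  have hE: "h \<in> E" and hb: "\<And>s. s\<in>{0..1} \<Longrightarrow> s / M \<le> h s \<and> h s \<le> M * s" using h unfolding G_def by auto
  have "s / M - 2 * T powr (-2/3) \<le> h s \<and> h s \<le> M * (s + 2 * T powr (-2/3))" if s: "s\<in>{0..1}" for s
  proof -
    have "0 \<le> M * (2 * T powr (-2/3))" using M p by simp
    moreover have "M * (s + 2 * T powr (-2/3)) = M * s + M * (2 * T powr (-2/3))" by (simp add: distrib_left)
    ultimately show ?thesis using hb[OF s] p by linarith
  qed
  then show "h \<in> GT M T" using hE unfolding GT_def by auto
qed

lemma f_in_Gamma:
  assumes n: "n > 0" and M: "M > 0" and T: "T > 0" and f: "fst f \<in> G M" "snd f \<in> G M"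
  shows "f \<in> Gamma M T f n"
proof -
  have E: "fst f \<in> E" "snd f \<in> E" using f unfolding G_def by auto
  have r: "1 / (2 * real n) > 0" using n by simp
  have "levy (fst f) (fst f) \<le> 1 / (2 * real n)" "levy (snd f) (snd f) \<le> 1 / (2 * real n)"
    using levy_self[OF E(1) r] levy_self[OF E(2) r] by auto
  moreover have "1 / (2 * real n) < 1 / real n" using n by (simp add: field_simps)
  ultimately have "levy2 f f < 1 / real n" unfolding levy2_def by linarith
  moreover have "Delta n f f < 1 / (real n)^2" using n by (simp add: Delta_self)
  moreover have "f \<in> GT M T \<times> GT M T" using G_GT[OF M T] f by (simp add: mem_Times_iff subset_iff)
  ultimately show ?thesis unfolding Gamma_def mem_Collect_eq by (intro conjI)
qed



lemma ratio_bounds: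
  fixes X Y xlo xhi ylo yhi T :: real
  assumes "0 < xlo" "xlo \<le> X" "X \<le> xhi" "0 < ylo" "ylo \<le> Y" "Y \<le> yhi" "T > 0"
  shows "ylo/(xhi + 1/T) \<le> (T*Y+1)/(T*X+1)" "(T*Y+1)/(T*X+1) \<le> yhi/xlo + 1/(T*xlo)"
    "ylo/(xhi + 1/T) \<le> Y/X" "Y/X \<le> yhi/xlo + 1/(T*xlo)"
proof -
  have X: "X > 0" using assms by linarith
  have Y: "Y > 0" using assms by linarith
  have T: "T > 0" using assms by simp
  have iT: "1/T > 0" using T by simp
  have XT: "X + 1/T > 0" "xhi + 1/T \<ge> X + 1/T" using X iT assms by linarith+
  have "ylo/(xhi + 1/T) \<le> Y/(X + 1/T)"
    using assms X T XT by (intro frac_le) auto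
  also have "Y/(X + 1/T) = (T*Y)/(T*X+1)" using T X
    by (simp add: field_simps)
  also have "\<dots> \<le> (T*Y+1)/(T*X+1)" using T X by (intro divide_right_mono) auto
  finally show "ylo/(xhi + 1/T) \<le> (T*Y+1)/(T*X+1)" .
  have TX: "T*X > 0" by (rule mult_pos_pos[OF T X])
  have "0 < T*X+1" using TX by linarith
  then have P: "0 < (T * X + 1) * (T * X)" using TX by (rule mult_pos_pos)
  have "0 \<le> T*Y+1" using T Y by (simp add: add_nonneg_nonneg)
  then have "(T*Y+1)/(T*X+1) \<le> (T*Y+1)/(T*X)"
    by (intro divide_left_mono[OF _ _ P]) simp_all
  also have "\<dots> = Y/X + 1/(T*X)" using T X by (simp add: field_simps)
  also have "Y/X \<le> yhi/xlo" using assms X by (intro frac_le) auto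
  also have "1/(T*X) \<le> 1/(T*xlo)" using assms T by (intro divide_left_mono mult_left_mono mult_pos_pos) auto
  finally show "(T*Y+1)/(T*X+1) \<le> yhi/xlo + 1/(T*xlo)" by simp
  have "ylo/(xhi + 1/T) \<le> Y/(X + 1/T)"
    using assms X T XT by (intro frac_le) auto
  also have "\<dots> \<le> Y/X"
  proof -
    have P2: "0 < (X + 1/T) * X" using XT(1) X by (rule mult_pos_pos)
    show ?thesis using X Y iT by (intro divide_left_mono[OF _ _ P2]) simp_all
  qed
  finally show "ylo/(xhi + 1/T) \<le> Y/X" .
  have "Y/X \<le> yhi/xlo" using assms X by (intro frac_le) auto
  also have "\<dots> \<le> yhi/xlo + 1/(T*xlo)" using assms by simp
  finally show "Y/X \<le> yhi/xlo + 1/(T*xlo)" .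
qed

lemma width_bound1:
  fixes xlo xhi ylo yhi T :: real
  assumes "0 < xlo" "xlo \<le> xhi" "0 \<le> ylo" "T > 0"
  shows "yhi/xlo + 1/(T*xlo) - ylo/(xhi + 1/T)
     \<le> (yhi-ylo)/xlo + ylo*(xhi + 1/T - xlo)/xlo^2 + 1/(T*xlo)"
proof -
  define xh where "xh = xhi + 1/T"
  have iT: "1/T > 0" using assms by simp
  have xh: "xh \<ge> xlo" "xh > 0" using assms iT unfolding xh_def by linarith+
  have e: "ylo/xlo - ylo/xh = ylo*(xh - xlo)/(xlo*xh)" using assms xh by (simp add: field_simps)
  have "ylo*(xh - xlo)/(xlo*xh) \<le> ylo*(xh - xlo)/(xlo*xlo)"
    using assms xh by (intro divide_left_mono mult_left_mono mult_nonneg_nonneg mult_pos_pos) auto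
  then have "ylo/xlo - ylo/xh \<le> ylo*(xh - xlo)/xlo^2" using e by (simp add: power2_eq_square)
  moreover have "yhi/xlo = (yhi - ylo)/xlo + ylo/xlo" by (simp add: diff_divide_distrib)
  ultimately show ?thesis unfolding xh_def by linarith
qed

lemma width_bound2:
  fixes n j M T xlo ylo dp dq :: real
  assumes n: "n > 0" and j: "j > 0" and M: "M > 1" and T: "T > 1"
    and xlo: "xlo \<ge> j/(2*n*M)" and ylo: "0 \<le> ylo" "ylo \<le> 2*M*j/n"
    and dp: "dp \<ge> 0" and dq: "dq \<ge> 0"
  shows "(dq + 2/n^2)/xlo + ylo*(dp + 2/n^2 + 1/T)/xlo^2 + 1/(T*xlo)
     \<le> (M^3/j) * (2*(n*dq) + 8*(n*dp) + 20/n + 10*n/T)"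
proof -
  define u where "u = 1/xlo"
  have jp: "j/(2*n*M) > 0" using n j M by simp
  have xp: "xlo > 0" using xlo jp by linarith
  have "0 < xlo * (j/(2*n*M))" using xp jp by (rule mult_pos_pos)
  then have "1/xlo \<le> 1/(j/(2*n*M))" using xp xlo jp by (intro divide_left_mono) auto
  then have u: "0 < u" "u \<le> 2*n*M/j" unfolding u_def using xp by auto
  have u2: "u^2 \<le> (2*n*M/j)^2" using u by (intro power_mono) auto
  have t1: "(dq + 2/n^2)/xlo \<le> (dq + 2/n^2) * (2*n*M/j)"
    unfolding divide_inverse using u unfolding u_def inverse_eq_divide
    by (intro mult_left_mono) (auto simp: dq n)
  have t2: "ylo*(dp + 2/n^2 + 1/T)/xlo^2 \<le> (2*M*j/n)*(dp + 2/n^2 + 1/T)*(2*n*M/j)^2"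
  proof -
    have "ylo*(dp + 2/n^2 + 1/T)/xlo^2 = ylo*(dp + 2/n^2 + 1/T)*u^2"
      unfolding u_def by (simp add: power_divide)
    also have "\<dots> \<le> (2*M*j/n)*(dp + 2/n^2 + 1/T)*(2*n*M/j)^2"
    proof -
      have a: "0 \<le> dp + 2/n^2 + 1/T" using dp n T by simp
      have b: "0 \<le> 2*M*j/n" using M j n by simp
      have "ylo*(dp + 2/n^2 + 1/T) \<le> (2*M*j/n)*(dp + 2/n^2 + 1/T)"
        using ylo a by (intro mult_right_mono) auto
      moreover have c: "0 \<le> (2*M*j/n)*(dp + 2/n^2 + 1/T)" by (rule mult_nonneg_nonneg[OF b a])
      ultimately show ?thesis by (rule mult_mono[OF _ u2]) simp
    qed
    finally show ?thesis .
  qed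
  have t3: "1/(T*xlo) \<le> (1/T)*(2*n*M/j)"
    using u T unfolding u_def by (simp add: divide_inverse mult_left_mono)
  have e1: "(dq + 2/n^2) * (2*n*M/j) = (2*M/j)*(n*dq) + (4*M/j)/n"
    using n j by (simp add: field_simps power2_eq_square)
  have e2: "(2*M*j/n)*(dp + 2/n^2 + 1/T)*(2*n*M/j)^2 = (8*M^3/j)*(n*dp) + (16*M^3/j)/n + (8*M^3/j)*(n/T)"
    using n j T by (simp add: field_simps power2_eq_square power3_eq_cube)
  have e3: "(1/T)*(2*n*M/j) = (2*M/j)*(n/T)" using n j T by (simp add: field_simps)
  have "1*1 \<le> M*M" using M by (intro mult_mono) auto
  then have "M*1 \<le> M*(M*M)" using M by (intro mult_left_mono) auto
  then have M3: "M \<le> M^3" by (simp add: power3_eq_cube)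
  have Mj: "2*M/j \<le> 2*M^3/j" "4*M/j \<le> 4*M^3/j" using M3 j by (auto intro: divide_right_mono)
  have pos: "n*dq \<ge> 0" "1/n \<ge> 0" "n/T \<ge> 0" "n*dp \<ge> 0" using n T dp dq by auto
  have "(2*M/j)*(n*dq) \<le> (2*M^3/j)*(n*dq)" by (rule mult_right_mono[OF Mj(1) pos(1)])
  moreover have "(4*M/j)/n \<le> (4*M^3/j)/n" using n by (intro divide_right_mono[OF Mj(2)]) simp
  moreover have "(2*M/j)*(n/T) \<le> (2*M^3/j)*(n/T)" by (rule mult_right_mono[OF Mj(1) pos(3)])
  moreover have "(M^3/j) * (2*(n*dq) + 8*(n*dp) + 20/n + 10*n/T)
      = (2*M^3/j)*(n*dq) + (8*M^3/j)*(n*dp) + (4*M^3/j)/n + (16*M^3/j)/n + (8*M^3/j)*(n/T) + (2*M^3/j)*(n/T)"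
    using n j T by (simp add: field_simps)
  ultimately show ?thesis using t1 t2 t3 e1 e2 e3 by linarith
qed




lemma inf_sup_bounds:
  fixes S :: "real set"
  assumes "a \<in> S" "\<And>x. x \<in> S \<Longrightarrow> lo \<le> x \<and> x \<le> hi"
  shows "lo \<le> Inf S" "Sup S \<le> hi" "Inf S \<le> a" "a \<le> Sup S"
proof -
  have ne: "S \<noteq> {}" using assms(1) by auto
  have ba: "bdd_above S" using assms(2) by (intro bdd_aboveI[of _ hi]) auto
  have bb: "bdd_below S" using assms(2) by (intro bdd_belowI[of _ lo]) auto
  show "lo \<le> Inf S" using ne assms(2) by (intro cInf_greatest) auto
  show "Sup S \<le> hi" using ne assms(2) by (intro cSup_least) auto
  show "Inf S \<le> a" using assms(1) bb by (rule cInf_lower)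
  show "a \<le> Sup S" using assms(1) ba by (rule cSup_upper)
qed

lemma amgm:
  fixes p q w :: real
  assumes "p \<ge> 0" "q \<ge> 0" "w > 0"
  shows "2 * sqrt (p*q) \<le> p/w + w*q"
proof -
  have "sqrt (p*q) = sqrt (p/w) * sqrt (w*q)" using assms
    by (simp add: real_sqrt_mult[symmetric])
  moreover have "0 \<le> (sqrt (p/w) - sqrt (w*q))^2" by simp
  moreover have "(sqrt (p/w))^2 = p/w" "(sqrt (w*q))^2 = w*q" using assms by simp_all
  ultimately show ?thesis by (simp add: power2_diff)
qed

lemma max_diff:
  fixes lo hi :: real
  assumes "lo \<le> hi"
  shows "max (1/2) (hi - 1/2) - max (1/2) (lo - 1/2) \<le> hi - lo"
  using assms by (simp add: max_def)

lemma PL_linear: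
  assumes "h \<in> PL n" "j < n"
  shows "\<exists>\<alpha> \<beta>. \<forall>x\<in>{real j / real n .. (real j + 1) / real n}. h x = \<alpha> + \<beta> * x"
  using assms unfolding PL_def by auto

lemma PL_deriv:
  fixes h :: "real \<Rightarrow> real"
  assumes "\<forall>x\<in>{a..b}. h x = \<alpha> + \<beta> * x" "a < s" "s < b"
  shows "dX h s = \<beta>"
proof -
  have d: "((\<lambda>x. \<alpha> + \<beta> * x) has_field_derivative \<beta>) (at s)"
    by (auto intro!: derivative_eq_intros)
  have "(h has_field_derivative \<beta>) (at s)"
    by (rule has_field_derivative_transform_within_open[OF d, of "{a<..<b}"]) (use assms in auto)
  then have "h differentiable (at s)" "deriv h s = \<beta>"
    by (auto simp: DERIV_imp_deriv intro: differentiableI has_field_derivative_imp_has_derivative)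
  then show ?thesis unfolding dX_def by simp
qed


definition errj :: "real \<Rightarrow> real \<Rightarrow> nat \<Rightarrow> real \<Rightarrow> path2 \<Rightarrow> nat \<Rightarrow> real" where
  "errj M T n w f j = (let p0 = fst f (real j / real n); p1 = fst f ((real j + 1) / real n);
     q0 = snd f (real j / real n); q1 = snd f ((real j + 1) / real n);
     D = (M^3/w^2) * (2*(real n*(q1-q0)) + 8*(real n*(p1-p0)) + 20/real n + 10*real n/T) in
     (2/real n)*D*(1+w) + 2/(real n)^2 + 10*M/(real n*w^2) + (p1 - p0 + 2/(real n)^2)/w)"

lemma interval_bound:
  fixes f :: path2 and n j :: nat and M T w :: real and h :: "real \<Rightarrow> real"
  assumes M: "M > 1" and T: "T > 1" and nM: "real n \<ge> 2*M"
    and fX: "fst f \<in> PL n" "fst f \<in> G M" and fY: "snd f \<in> PL n" "snd f \<in> G M"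
    and jn: "j + 1 \<le> n" and w: "w^4 = real n" "w \<ge> 1" and jw: "w^2 \<le> real j"
    and hint: "h integrable_on Ij n j"
    and hdef: "\<And>s. h s = (sqrt (2 * RstarX (fst f s) (snd f s)) - sqrt (dX (fst f) s))^2"
  shows "integral (Ij n j) h \<le> EplusX (Ij n j) (Gamma M T f n) T + errj M T n w f j"
proof -
  define N where "N = real n"
  define s0 where "s0 = real j / N"
  define s1 where "s1 = (real j + 1) / N"
  define e where "e = 1 / N^2"
  define p0 where "p0 = fst f s0"
  define p1 where "p1 = fst f s1"
  define q0 where "q0 = snd f s0"
  define q1 where "q1 = snd f s1"
  define \<Gamma> where "\<Gamma> = Gamma M T f n"
  have N0: "N > 0" using nM M unfolding N_def by linarith
  have w1: "w^2 \<ge> 1" using w(2) by (simp add: one_le_power)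
  have j1: "real j \<ge> 1" using jw w1 by linarith
  have jN: "real j + 1 \<le> N" using jn unfolding N_def by linarith
  have s01: "s0 < s1" "0 \<le> s0" "s1 \<le> 1" unfolding s0_def s1_def using N0 jN
    by (auto simp: divide_strict_right_mono field_simps)
  have L: "s1 - s0 = 1/N" unfolding s0_def s1_def using N0 by (simp add: field_simps)
  have Ieq: "Ij n j = {s0..s1}" unfolding Ij_def s0_def s1_def N_def by simp
  have fE: "fst f \<in> E" "snd f \<in> E" using fX fY unfolding G_def by auto
  have fGb: "\<And>s. s \<in> {0..1} \<Longrightarrow> s / M \<le> fst f s \<and> fst f s \<le> M * s"
    "\<And>s. s \<in> {0..1} \<Longrightarrow> s / M \<le> snd f s \<and> snd f s \<le> M * s"
    using fX(2) fY(2) unfolding G_def by auto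
  have pb: "p0 \<ge> s0/M" "q0 \<ge> s0/M" "p1 \<le> M* s1" "q1 \<le> M* s1"
    using fGb[of s0] fGb[of s1] s01 unfolding p0_def p1_def q0_def q1_def by auto
  have pm: "p0 \<le> p1" "q0 \<le> q1"
    using E_mono[OF fE(1)] E_mono[OF fE(2)] s01 unfolding p0_def p1_def q0_def q1_def by auto
  obtain \<alpha> \<beta> where lin: "\<forall>x\<in>{s0..s1}. fst f x = \<alpha> + \<beta> * x"
    using PL_linear[OF fX(1), of j] jn unfolding s0_def s1_def N_def by auto
  have beta: "\<beta> = N * (p1 - p0)"
  proof -
    have "p1 - p0 = \<beta> * (s1 - s0)" using lin s01 unfolding p0_def p1_def
      by (auto simp: algebra_simps)
    then show ?thesis using L N0 by (simp add: field_simps)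
  qed
  have dXs: "\<And>s. s \<in> {s0<..<s1} \<Longrightarrow> dX (fst f) s = \<beta>"
    using PL_deriv[OF lin] by auto
  have fG: "f \<in> \<Gamma>" unfolding \<Gamma>_def
    using f_in_Gamma[of n M T f] N0 M T fX fY unfolding N_def by auto
  have sucj: "real (Suc j) = real j + 1" by simp
  have grid: "\<bar>p0 - fst g s0\<bar> < e" "\<bar>p1 - fst g s1\<bar> < e"
     "\<bar>q0 - snd g s0\<bar> < e" "\<bar>q1 - snd g s1\<bar> < e" if g: "g \<in> \<Gamma>" for g
    using Gamma_grid[of g M T f n j] Gamma_grid[of g M T f n "Suc j"] g jn
    unfolding \<Gamma>_def p0_def p1_def q0_def q1_def s0_def s1_def e_def N_def sucj by auto
  have gbox: "p0 - e < fst g s \<and> fst g s < p1 + e \<and> q0 - e < snd g s \<and> snd g s < q1 + e"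
    if g: "g \<in> \<Gamma>" and s: "s \<in> {s0..s1}" for g s
  proof -
    have gE: "fst g \<in> E" "snd g \<in> E" using Gamma_E g unfolding \<Gamma>_def by auto
    have "fst g s0 \<le> fst g s" "fst g s \<le> fst g s1" "snd g s0 \<le> snd g s" "snd g s \<le> snd g s1"
      using E_mono[OF gE(1)] E_mono[OF gE(2)] s by auto
    then show ?thesis using grid[OF g] by auto
  qed
  define xlo where "xlo = p0 - e"
  define xhi where "xhi = p1 + e"
  define ylo where "ylo = q0 - e"
  define yhi where "yhi = q1 + e"
  have jNM: "real j / (2*N*M) > 0" using j1 N0 M by simp
  have ele: "e \<le> real j / (2*N*M)"
  proof -
    have "2*M \<le> N * real j" using nM j1 N0 unfolding N_def
      by (metis mult.right_neutral mult_left_mono order_trans less_imp_le)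
    then have "2*M/(N * real j) \<le> 1" using N0 j1 by simp
    then have "1/N^2 \<le> real j/(2*N*M)" using N0 j1 M by (simp add: field_simps power2_eq_square)
    then show ?thesis unfolding e_def .
  qed
  have s0M: "s0/M = 2 * (real j / (2*N*M))" unfolding s0_def using N0 M by (simp add: field_simps)
  have xlo: "xlo \<ge> real j / (2*N*M)" unfolding xlo_def using pb(1) ele s0M by linarith
  have ylo: "ylo \<ge> real j / (2*N*M)" unfolding ylo_def using pb(2) ele s0M by linarith
  have xlo0: "xlo > 0" "ylo > 0" using xlo ylo jNM by linarith+
  have e0: "e > 0" unfolding e_def using N0 by simp
  have s1M: "M * s1 \<le> 2*M*real j/N" unfolding s1_def using N0 M j1 by (simp add: field_simps)
  have ylo2: "ylo \<le> 2*M*real j/N" unfolding ylo_def using pm pb s1M e0 by linarith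
  define lo where "lo = ylo/(xhi + 1/T)"
  define hi where "hi = yhi/xlo + 1/(T*xlo)"
  define Rl where "Rl = max (1/2) (lo - 1/2)"
  define Rh where "Rh = max (1/2) (hi - 1/2)"
  have RXb: "Rl \<le> RX (T * fst g s) (T * snd g s) \<and> RX (T * fst g s) (T * snd g s) \<le> Rh"
    if g: "g \<in> \<Gamma>" and s: "s \<in> {s0..s1}" for g s
  proof -
    have b: "xlo \<le> fst g s" "fst g s \<le> xhi" "ylo \<le> snd g s" "snd g s \<le> yhi"
      using gbox[OF g s] unfolding xlo_def xhi_def ylo_def yhi_def by auto
    have rb: "lo \<le> (T * snd g s + 1)/(T * fst g s + 1)" "(T * snd g s + 1)/(T * fst g s + 1) \<le> hi"
      using ratio_bounds(1,2)[OF xlo0(1) b(1,2) xlo0(2) b(3,4)] T unfolding lo_def hi_def by auto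
    have pos: "T * fst g s > -1" "T * snd g s > -1" using b xlo0 T
      by (smt (verit) mult_pos_pos)+
    have "RX (T * fst g s) (T * snd g s) = max (1/2) ((T * snd g s + 1)/(T * fst g s + 1) - 1/2)"
      by (rule RX_formula[OF pos])
    then show ?thesis using rb unfolding Rl_def Rh_def by (auto intro: max.mono)
  qed
  define SR where "SR = {RX (T * fst g s) (T * snd g s) | s g. s \<in> {s0..s1} \<and> g \<in> \<Gamma>}"
  have rmdef: "RXminus (Ij n j) \<Gamma> T = Inf SR" unfolding RXminus_def SR_def Ieq by simp
  have rpdef: "RXplus (Ij n j) \<Gamma> T = Sup SR" unfolding RXplus_def SR_def Ieq by simp
  have SRa: "RX (T * fst f s0) (T * snd f s0) \<in> SR" unfolding SR_def mem_Collect_eq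
    by (intro exI[of _ s0] exI[of _ f]) (use fG s01 in auto)
  have SRb: "\<And>x. x \<in> SR \<Longrightarrow> Rl \<le> x \<and> x \<le> Rh" unfolding SR_def using RXb by auto
  note SRi = inf_sup_bounds[OF SRa SRb]
  define SX0 where "SX0 = {fst g s0 | g. g \<in> \<Gamma>}"
  define SX1 where "SX1 = {fst g s1 | g. g \<in> \<Gamma>}"
  have SX0a: "p0 \<in> SX0" unfolding SX0_def p0_def mem_Collect_eq by (intro exI[of _ f]) (use fG in auto)
  have SX1a: "p1 \<in> SX1" unfolding SX1_def p1_def mem_Collect_eq by (intro exI[of _ f]) (use fG in auto)
  have SX0b: "\<And>x. x \<in> SX0 \<Longrightarrow> p0 - e \<le> x \<and> x \<le> p0 + e" unfolding SX0_def using grid by fastforce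
  have SX1b: "\<And>x. x \<in> SX1 \<Longrightarrow> p1 - e \<le> x \<and> x \<le> p1 + e" unfolding SX1_def using grid by fastforce
  note SX0i = inf_sup_bounds[OF SX0a SX0b]
  note SX1i = inf_sup_bounds[OF SX1a SX1b]
  define A where "A = xplus s1 \<Gamma> - xminus s0 \<Gamma>"
  define B where "B = xminus s1 \<Gamma> - xplus s0 \<Gamma>"
  have xpm: "xplus s1 \<Gamma> = Sup SX1" "xminus s0 \<Gamma> = Inf SX0" "xminus s1 \<Gamma> = Inf SX1" "xplus s0 \<Gamma> = Sup SX0"
    unfolding xplus_def xminus_def SX0_def SX1_def by simp_all
  have AB: "p1 - p0 \<le> A" "A \<le> p1 - p0 + 2*e" "p1 - p0 - 2*e \<le> B" "B \<le> p1 - p0"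
    unfolding A_def B_def xpm using SX0i SX1i by linarith+
  have rm0: "0 \<le> Inf SR" using SRi(1) unfolding Rl_def by linarith
  have rmp: "Inf SR \<le> Sup SR" using SRi(3,4) by linarith
  obtain x1 y1 where xy1: "EplusX {s0..s1} \<Gamma> T = (sqrt x1 - sqrt y1)^2"
     "2 * Inf SR * (s1-s0) \<le> x1" "x1 \<le> 2 * Sup SR * (s1-s0)"
     "B \<le> y1" "y1 \<le> A" "0 \<le> y1"
    using EplusX_repr[OF s01(1) rmdef[unfolded Ieq, symmetric] rpdef[unfolded Ieq, symmetric] A_def B_def rm0 rmp]
      AB pm by auto
  define D where "D = (M^3/w^2) * (2*(N*(q1-q0)) + 8*(N*(p1-p0)) + 20/N + 10*N/T)"
  define err where "err = (2/N)*D*(1+w) + 2/N^2 + 10*M/(N*w^2) + (p1 - p0 + 2/N^2)/w"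
  have errdef: "errj M T n w f j = err"
    unfolding errj_def err_def D_def Let_def p0_def p1_def q0_def q1_def N_def s0_def s1_def by simp
  define Ev where "Ev = EplusX (Ij n j) \<Gamma> T"
  have Ev: "Ev = (sqrt x1 - sqrt y1)^2" using xy1(1) Ieq unfolding Ev_def by simp
  have T0: "T > 0" using T by simp
  have xlohi: "xlo \<le> xhi" unfolding xlo_def xhi_def using pm e0 by linarith
  have ylo0: "0 \<le> ylo" using xlo0 by simp
  have lohi: "lo \<le> hi"
  proof -
    have b: "xlo \<le> p0" "p0 \<le> xhi" "ylo \<le> q0" "q0 \<le> yhi"
      unfolding xlo_def xhi_def ylo_def yhi_def using e0 pm by linarith+
    show ?thesis using ratio_bounds(3,4)[OF xlo0(1) b(1,2) xlo0(2) b(3,4) T0] unfolding lo_def hi_def by linarith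
  qed
  have wid: "hi - lo \<le> D"
  proof -
    have "hi - lo \<le> (yhi-ylo)/xlo + ylo*(xhi + 1/T - xlo)/xlo^2 + 1/(T*xlo)"
      unfolding hi_def lo_def by (rule width_bound1[OF xlo0(1) xlohi ylo0 T0])
    also have "(yhi-ylo) = (q1-q0) + 2/N^2" unfolding yhi_def ylo_def e_def by simp
    also have "(xhi + 1/T - xlo) = (p1-p0) + 2/N^2 + 1/T" unfolding xhi_def xlo_def e_def by simp
    also have "((q1 - q0) + 2/N^2)/xlo + ylo*((p1-p0) + 2/N^2 + 1/T)/xlo^2 + 1/(T*xlo)
        \<le> (M^3/real j) * (2*(N*(q1-q0)) + 8*(N*(p1-p0)) + 20/N + 10*N/T)"
      using j1 xlo ylo0 ylo2 pm M T N0 by (intro width_bound2) auto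
    also have "\<dots> \<le> D" unfolding D_def
    proof (rule mult_right_mono)
      have "0 < real j * w^2" using j1 w1 by (intro mult_pos_pos) linarith+
      then show "M^3/real j \<le> M^3/w^2" using jw w1 M by (intro divide_left_mono) auto
      show "0 \<le> 2*(N*(q1-q0)) + 8*(N*(p1-p0)) + 20/N + 10*N/T" using pm N0 T by simp
    qed
    finally show ?thesis .
  qed
  have Rdiff: "Rh - Rl \<le> D" using max_diff[OF lohi] wid unfolding Rh_def Rl_def by linarith
  have pt: "h s \<le> N * (Ev + err)" if s: "s \<in> {s0<..<s1}" for s
  proof -
    define X where "X = fst f s"
    define Y where "Y = snd f s"
    have sI: "s0 \<le> s" "s \<le> s1" using s by auto
    have XY: "p0 \<le> X" "X \<le> p1" "q0 \<le> Y" "Y \<le> q1"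
      unfolding X_def Y_def p0_def p1_def q0_def q1_def
      using E_mono[OF fE(1)] E_mono[OF fE(2)] sI by auto
    have b: "xlo \<le> X" "X \<le> xhi" "ylo \<le> Y" "Y \<le> yhi"
      unfolding xlo_def xhi_def ylo_def yhi_def using e0 XY by linarith+
    have X0: "X > 0" "Y > 0" using b xlo0 by linarith+
    define Rs where "Rs = RstarX X Y"
    have Rs: "Rs = max (1/2) (Y/X - 1/2)" unfolding Rs_def by (rule RstarX_formula[OF X0])
    have rb: "lo \<le> Y/X" "Y/X \<le> hi"
      using ratio_bounds(3,4)[OF xlo0(1) b(1,2) xlo0(2) b(3,4) T0] unfolding lo_def hi_def by auto
    have Rsb: "Rl \<le> Rs" "Rs \<le> Rh" unfolding Rs Rl_def Rh_def using rb by (auto intro: max.mono)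
    have p0pos: "p0 > 0" using XY X0 b xlo0 unfolding xlo_def using e0 by linarith
    have "Y/X \<le> q1/p0" using XY X0 p0pos by (intro frac_le) auto
    also have "\<dots> \<le> (M * s1)/(s0/M)"
    proof -
      have "s0/M > 0" using s0M jNM by linarith
      then show ?thesis using pb p0pos X0 XY by (intro frac_le) auto
    qed
    also have "(M * s1)/(s0/M) = M^2 * ((real j + 1)/real j)"
      unfolding s0_def s1_def using N0 j1 M by (simp add: field_simps power2_eq_square)
    also have "\<dots> \<le> M^2 * 2" using j1 by (intro mult_left_mono) (auto simp: field_simps)
    finally have YX: "Y/X \<le> 2*M^2" by simp
    have "1*1 \<le> M*M" using M by (intro mult_mono) auto
    then have M2: "1/2 \<le> 2*M^2" by (simp add: power2_eq_square)
    have Rs2: "Rs \<le> 2*M^2" unfolding Rs using YX M2 by simp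
    have Rs0: "Rs \<ge> 0" unfolding Rs by simp
    define x where "x = 2*Rs/N"
    define y where "y = p1 - p0"
    have x0: "x \<ge> 0" "y \<ge> 0" unfolding x_def y_def using Rs0 N0 pm by auto
    have hs: "h s = N * (sqrt x - sqrt y)^2"
    proof -
      have "h s = (sqrt (2 * Rs) - sqrt \<beta>)^2" unfolding hdef Rs_def X_def Y_def using dXs[OF s] by simp
      also have "2 * Rs = N * x" unfolding x_def using N0 by simp
      also have "\<beta> = N * y" unfolding beta y_def by simp
      also have "(sqrt (N*x) - sqrt (N*y))^2 = N * (sqrt x - sqrt y)^2"
        using N0 by (simp add: real_sqrt_mult power2_diff power_mult_distrib algebra_simps)
      finally show ?thesis .
    qed
    have x1b: "2*Rl/N \<le> x1" "x1 \<le> 2*Rh/N"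
    proof -
      have "2*Rl/N \<le> 2 * Inf SR * (s1-s0)" unfolding L using SRi(1) N0 by (simp add: divide_right_mono)
      then show "2*Rl/N \<le> x1" using xy1(2) by linarith
      have "2 * Sup SR * (s1-s0) \<le> 2*Rh/N" unfolding L using SRi(2) N0 by (simp add: divide_right_mono)
      then show "x1 \<le> 2*Rh/N" using xy1(3) by linarith
    qed
    have xb: "2*Rl/N \<le> x" "x \<le> 2*Rh/N" unfolding x_def using Rsb N0 by (simp_all add: divide_right_mono)
    have dx: "\<bar>x - x1\<bar> \<le> 2*D/N"
    proof -
      have "2*Rh/N - 2*Rl/N = 2*(Rh - Rl)/N" by (simp add: diff_divide_distrib)
      also have "\<dots> \<le> 2*D/N" using Rdiff N0 by (simp add: divide_right_mono)
      finally show ?thesis using x1b xb by linarith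
    qed
    have dy: "\<bar>y - y1\<bar> \<le> 2*e" using AB xy1(4,5) unfolding y_def by linarith
    have xle: "x \<le> 4*M^2/N" unfolding x_def using Rs2 N0 by (simp add: divide_right_mono)
    have t1: "2 * sqrt (x * \<bar>y - y1\<bar>) \<le> 10*M/(N*w^2)"
    proof -
      have "x * \<bar>y - y1\<bar> \<le> (4*M^2/N) * (2*e)" using xle dy x0 by (intro mult_mono) auto
      also have "\<dots> \<le> (5*M/(N*w^2))^2"
      proof -
        have "(w^2)^2 = w^4" by (simp flip: power_mult)
        then have "(5*M/(N*w^2))^2 = 25*M^2/(N^2 * w^4)" by (simp add: power_mult_distrib power_divide)
        also have "\<dots> = 25*M^2/(N^2 * N)" using w(1) unfolding N_def by simp
        finally have "(5*M/(N*w^2))^2 = 25*M^2/(N^2*N)" .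
        moreover have "(4*M^2/N) * (2*e) = 8*M^2/(N^2*N)" unfolding e_def using N0 by (simp add: field_simps power2_eq_square)
        moreover have "8*M^2/(N^2*N) \<le> 25*M^2/(N^2*N)" using N0 by (intro divide_right_mono) auto
        ultimately show ?thesis by simp
      qed
      finally have "sqrt (x * \<bar>y - y1\<bar>) \<le> sqrt ((5*M/(N*w^2))^2)" by (rule real_sqrt_le_mono)
      also have "\<dots> = 5*M/(N*w^2)" using M N0 w1 by simp
      finally show ?thesis by simp
    qed
    have t2: "2 * sqrt (y1 * \<bar>x - x1\<bar>) \<le> (p1 - p0 + 2*e)/w + w*(2*D/N)"
    proof -
      have w0: "w > 0" using w(2) by simp
      have "2 * sqrt (y1 * \<bar>x - x1\<bar>) \<le> y1/w + w*\<bar>x - x1\<bar>" using xy1(6) w0 by (intro amgm) auto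
      also have "y1/w \<le> (p1 - p0 + 2*e)/w" using xy1(5) AB w0 by (intro divide_right_mono) auto
      also have "w*\<bar>x - x1\<bar> \<le> w*(2*D/N)" using dx w0 by (intro mult_left_mono) auto
      finally show ?thesis by simp
    qed
    have x10: "x1 \<ge> 0" using x1b(1) N0 unfolding Rl_def by (smt (verit) divide_nonneg_pos)
    have "(sqrt x - sqrt y)^2 \<le> (sqrt x1 - sqrt y1)^2 + \<bar>x-x1\<bar> + \<bar>y-y1\<bar>
          + 2 * sqrt(x*\<bar>y-y1\<bar>) + 2 * sqrt(y1*\<bar>x-x1\<bar>)"
      by (rule phi_bound[OF x0 x10 xy1(6)])
    also have "\<dots> \<le> Ev + err"
    proof -
      have eq: "(2/N)*D*(1+w) = 2*D/N + w*(2*D/N)" by (simp add: algebra_simps add_divide_distrib)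
      have e2: "2*e = 2/N^2" "(p1 - p0 + 2*e)/w = (p1 - p0 + 2/N^2)/w" unfolding e_def by simp_all
      show ?thesis unfolding Ev[symmetric] err_def using dx dy t1 t2 eq e2 by linarith
    qed
    finally have "(sqrt x - sqrt y)^2 \<le> Ev + err" .
    then show ?thesis unfolding hs using N0 by (simp add: mult_left_mono)
  qed
  have hint': "h integrable_on {s0<..<s1}" using hint unfolding Ieq by (simp add: integrable_on_open_interval_real)
  have cint: "(\<lambda>_. N * (Ev + err)) integrable_on {s0<..<s1}"
    unfolding integrable_on_open_interval_real by (rule integrable_const_ivl)
  have "integral (Ij n j) h = integral {s0<..<s1} h" unfolding Ieq by (rule integral_open_interval_real)
  also have "\<dots> \<le> integral {s0<..<s1} (\<lambda>_. N * (Ev + err))"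
    by (rule integral_le[OF hint' cint pt])
  also have "\<dots> = integral {s0..s1} (\<lambda>_. N * (Ev + err))" by (rule integral_open_interval_real[symmetric])
  also have "\<dots> = (s1 - s0) * (N * (Ev + err))" using s01 by simp
  also have "\<dots> = Ev + err" unfolding L using N0 by simp
  finally show ?thesis unfolding errdef Ev_def \<Gamma>_def .
qed




lemma integral_split:
  fixes h :: "real \<Rightarrow> real" and N :: real
  assumes int: "h integrable_on {real k / N .. real K / N}" and kK: "k \<le> K" and N: "N > 0"
  shows "integral {real k / N .. real K / N} h = (\<Sum>j\<in>{k..<K}. integral {real j / N .. (real j + 1) / N} h)"
proof -
  have "m \<le> K \<longrightarrow> integral {real k / N .. real m / N} h = (\<Sum>j\<in>{k..<m}. integral {real j / N .. (real j + 1) / N} h)"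
    if "k \<le> m" for m
    using that
  proof (induction m rule: dec_induct)
    case base
    then show ?case by simp
  next
    case (step m)
    show ?case
    proof
      assume mK: "Suc m \<le> K"
      have le1: "real k / N \<le> real m / N" "real m / N \<le> real (Suc m) / N"
        using step(1) N by (auto simp: divide_right_mono)
      have sub: "{real k / N .. real (Suc m) / N} \<subseteq> {real k / N .. real K / N}"
        using mK N by (auto simp: divide_right_mono)
      have int': "h integrable_on {real k / N .. real (Suc m) / N}"
        by (rule integrable_subinterval_real[OF int sub])
      have "integral {real k / N .. real (Suc m) / N} h
          = integral {real k / N .. real m / N} h + integral {real m / N .. real (Suc m) / N} h"
        using Henstock_Kurzweil_Integration.integral_combine[OF le1 int'] by simp
      also have "integral {real k / N .. real m / N} h = (\<Sum>j\<in>{k..<m}. integral {real j / N .. (real j + 1) / N} h)"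
        using step(3) mK by simp
      finally show "integral {real k / N .. real (Suc m) / N} h = (\<Sum>j\<in>{k..<Suc m}. integral {real j / N .. (real j + 1) / N} h)"
        using step(1) by (simp add: add.commute)
    qed
  qed
  then show ?thesis using kK by simp
qed

lemma lin_ring:
  fixes r N c A1 A2 B1 B2 dq dp iw t w :: real
  shows "r*(c*(2*(N*dq) + 8*(N*dp) + A1 + A2))*(1+w) + B1 + B2 + (dp*iw + t)
    = r*c*(1+w)*(2*N)*dq + (r*c*(1+w)*(8*N) + iw)*dp + (r*c*(1+w)*(A1 + A2) + B1 + B2 + t)"
  by (simp add: algebra_simps)

lemma lin_aux:
  fixes N c A1 A2 B1 B2 dq dp w :: real
  shows "(2/N)*(c*(2*(N*dq) + 8*(N*dp) + A1 + A2))*(1+w) + B1 + B2 + (dp + 2/N^2)/w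
    = (2/N)*c*(1+w)*(2*N)*dq + ((2/N)*c*(1+w)*(8*N) + 1/w)*dp + ((2/N)*c*(1+w)*(A1 + A2) + B1 + B2 + 2/(N^2*w))"
proof -
  have eq1: "(dp + 2/N^2)/w = dp*(1/w) + 2/(N^2*w)" by (simp add: add_divide_distrib)
  show ?thesis unfolding eq1 by (rule lin_ring)
qed

lemma errj_linear:
  shows "errj M T n w f j =
     (2/real n)*(M^3/w^2)*(1+w)*(2*real n) * (snd f ((real j + 1) / real n) - snd f (real j / real n))
   + ((2/real n)*(M^3/w^2)*(1+w)*(8*real n) + 1/w) * (fst f ((real j + 1) / real n) - fst f (real j / real n))
   + ((2/real n)*(M^3/w^2)*(1+w)*(20/real n + 10*real n/T) + 2/(real n)^2 + 10*M/(real n*w^2) + 2/((real n)^2*w))"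
  unfolding errj_def Let_def by (rule lin_aux)

lemma final_ineq:
  fixes M T w N :: real
  assumes M: "M \<ge> 1" and T: "T \<ge> 1" and w: "w \<ge> 1" and N: "N \<ge> w"
  shows "((2/N)*(M^3/w^2)*(1+w)*(2*N)) * M + ((2/N)*(M^3/w^2)*(1+w)*(8*N) + 1/w) * M
     + N * ((2/N)*(M^3/w^2)*(1+w)*(20/N + 10*N/T) + 2/N^2 + 10*M/(N*w^2) + 2/(N^2*w))
     \<le> 200*(M^4/w + M^3*N/sqrt T)"
proof -
  have N0: "N > 0" "N \<ge> 1" using N w by linarith+
  have w0: "w > 0" using w by simp
  define Q where "Q = (M^3/w^2)*(1+w)"
  have M1: "M \<le> M^3" "M^3 \<le> M^4" "1 \<le> M"
  proof -
    have "1*1 \<le> M*M" using M by (intro mult_mono) auto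
    then have "M*1 \<le> M*(M*M)" using M by (intro mult_left_mono) auto
    then show "M \<le> M^3" by (simp add: power3_eq_cube)
    have "M^3*1 \<le> M^3*M" using M by (intro mult_left_mono) auto
    then show "M^3 \<le> M^4" by (simp add: power3_eq_cube power4_eq_xxxx)
  qed (use M in simp)
  have Q0: "Q \<ge> 0" unfolding Q_def using w M by simp
  have Q: "Q \<le> 2*M^3/w"
  proof -
    have "(1+w) \<le> 2*w" using w by simp
    then have "(M^3/w^2)*(1+w) \<le> (M^3/w^2)*(2*w)" using M by (intro mult_left_mono) auto
    also have "\<dots> = 2*M^3/w" using w0 by (simp add: power2_eq_square field_simps)
    finally show ?thesis unfolding Q_def .
  qed
  have n2: "(2/N)*(2*N) = 4" "(2/N)*(8*N) = 16" using N0 by simp_all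
  have "((2/N)*(M^3/w^2)*(1+w)*(2*N)) = ((2/N)*(2*N))*Q" unfolding Q_def by (simp only: mult_ac)
  then have e1: "((2/N)*(M^3/w^2)*(1+w)*(2*N)) * M = 4*Q*M" using n2 by simp
  have "((2/N)*(M^3/w^2)*(1+w)*(8*N)) = ((2/N)*(8*N))*Q" unfolding Q_def by (simp only: mult_ac)
  then have e2: "((2/N)*(M^3/w^2)*(1+w)*(8*N) + 1/w) * M = 16*Q*M + M/w" using n2 by (simp add: algebra_simps)
  have e3: "N * ((2/N)*(M^3/w^2)*(1+w)*(20/N + 10*N/T) + 2/N^2 + 10*M/(N*w^2) + 2/(N^2*w))
     = 40*Q/N + 20*Q*N/T + 2/N + 10*M/w^2 + 2/(N*w)" unfolding Q_def using N0 w0 T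
    by (simp add: field_simps power2_eq_square)
  have QM: "Q*M \<le> 2*M^4/w"
  proof -
    have "Q*M \<le> (2*M^3/w)*M" using Q M by (intro mult_right_mono) auto
    also have "\<dots> = 2*M^4/w" by (simp add: power3_eq_cube power4_eq_xxxx)
    finally show ?thesis .
  qed
  have a1: "M/w \<le> M^4/w" using M1 w0 by (intro divide_right_mono) auto
  have a2: "Q/N \<le> 2*M^4/w"
  proof -
    have "Q/N \<le> Q" using Q0 N0 by (simp add: divide_le_eq mult_le_cancel_left1 order_trans[of _ "Q*1"])
    also have "\<dots> \<le> 2*M^3/w" by (rule Q)
    also have "\<dots> \<le> 2*M^4/w" using M1 w0 by (intro divide_right_mono) auto
    finally show ?thesis .
  qed
  have a3: "Q*N/T \<le> 2*M^3*N/sqrt T"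
  proof -
    have sT1: "sqrt T \<ge> 1" using T by simp
    have "sqrt T * 1 \<le> sqrt T * sqrt T" using sT1 by (intro mult_left_mono) auto
    then have sT: "sqrt T \<ge> 1" "sqrt T \<le> T" using T sT1 by simp_all
    have "Q*N/T \<le> (2*M^3/w)*N/T" using Q N0 T by (intro divide_right_mono mult_right_mono) auto
    also have "\<dots> = 2*M^3*N/(w*T)" by simp
    also have "\<dots> \<le> 2*M^3*N/sqrt T"
    proof (rule divide_left_mono)
      show "sqrt T \<le> w*T" using sT w T by (metis mult_le_cancel_right1 order_trans less_le_trans zero_less_one linorder_not_le mult_1 mult_right_mono order.strict_implies_order)
      show "0 \<le> 2*M^3*N" using M N0 by simp
      show "0 < w*T * sqrt T" using w0 T sT by simp
    qed
    finally show ?thesis .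
  qed
  have a4: "2/N \<le> 2*M^4/w"
  proof -
    have "2/N \<le> 2/w" using N w0 by (intro divide_left_mono) auto
    also have "\<dots> \<le> 2*M^4/w" using M1 w0 by (intro divide_right_mono) auto
    finally show ?thesis .
  qed
  have a5: "10*M/w^2 \<le> 10*M^4/w"
  proof -
    have "w \<le> w^2" using w by (simp add: power2_eq_square)
    then have "10*M/w^2 \<le> 10*M/w" using w0 M by (intro divide_left_mono) auto
    also have "\<dots> \<le> 10*M^4/w" using M1 w0 by (intro divide_right_mono) auto
    finally show ?thesis .
  qed
  have a6: "2/(N*w) \<le> 2*M^4/w"
  proof -
    have "w \<le> N*w" using N0 w0 by simp
    then have "2/(N*w) \<le> 2/w" using w0 N0 by (intro divide_left_mono) auto
    also have "\<dots> \<le> 2*M^4/w" using M1 w0 by (intro divide_right_mono) auto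
    finally show ?thesis .
  qed
  have p: "0 \<le> M^4/w" "0 \<le> M^3*N/sqrt T" using M w0 N0 T by auto
  define a where "a = M^4/w"
  define b where "b = M^3*N/sqrt T"
  define q1 where "q1 = Q/N"
  define q2 where "q2 = Q*N/T"
  define q3 where "q3 = Q*M"
  have lhs: "4*Q*M + (16*Q*M + M/w) + (40*Q/N + 20*Q*N/T + 2/N + 10*M/w^2 + 2/(N*w))
     = 4*q3 + (16*q3 + M/w) + (40*q1 + 20*q2 + 2/N + 10*M/w^2 + 2/(N*w))"
    unfolding q1_def q2_def q3_def by simp
  have f1: "q3 \<le> 2*a" using QM unfolding q3_def a_def by simp
  have f2: "M/w \<le> a" using a1 unfolding a_def .
  have f3: "q1 \<le> 2*a" using a2 unfolding q1_def a_def by simp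
  have f4: "q2 \<le> 2*b" using a3 unfolding q2_def b_def by simp
  have f5: "2/N \<le> 2*a" using a4 unfolding a_def by simp
  have f6: "10*M/w^2 \<le> 10*a" using a5 unfolding a_def by simp
  have f7: "2/(N*w) \<le> 2*a" using a6 unfolding a_def by simp
  show ?thesis unfolding e1 e2 e3 lhs a_def[symmetric] b_def[symmetric] using f1 f2 f3 f4 f5 f6 f7 p
    unfolding a_def[symmetric] b_def[symmetric]
  proof -
    fix r1 r2 r3 r4 :: real
    have gen: "\<And>r1 r2 r3 r4. q3 \<le> 2*a \<Longrightarrow> r1 \<le> a \<Longrightarrow> q1 \<le> 2*a \<Longrightarrow> q2 \<le> 2*b \<Longrightarrow> r2 \<le> 2*a
       \<Longrightarrow> r3 \<le> 10*a \<Longrightarrow> r4 \<le> 2*a \<Longrightarrow> 0 \<le> a \<Longrightarrow> 0 \<le> b \<Longrightarrow>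
       4*q3 + (16*q3 + r1) + (40*q1 + 20*q2 + r2 + r3 + r4) \<le> 200*(a+b)" by (smt (verit))
    assume h: "q3 \<le> 2*a" "M/w \<le> a" "q1 \<le> 2*a" "q2 \<le> 2*b" "2/N \<le> 2*a" "10*M/w^2 \<le> 10*a"
      "2/(N*w) \<le> 2*a" "0 \<le> a" "0 \<le> b"
    show "4*q3 + (16*q3 + M/w) + (40*q1 + 20*q2 + 2/N + 10*M/w^2 + 2/(N*w)) \<le> 200*(a+b)"
      by (rule gen[OF h])
  qed
qed

lemma sum_err_bound:
  fixes f :: path2 and n k K :: nat and M T w :: real
  assumes M: "M > 1" and T: "T > 1" and w: "w \<ge> 1" "w^4 = real n" and n: "n > 0"
    and fX: "fst f \<in> G M" and fY: "snd f \<in> G M" and kK: "k \<le> K" "K \<le> n"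
  shows "(\<Sum>j\<in>{k..<K}. errj M T n w f j) \<le> 200*(M^4/w + M^3*real n/sqrt T)"
proof -
  define N where "N = real n"
  have N0: "N > 0" unfolding N_def using n by simp
  define c1 where "c1 = (2/N)*(M^3/w^2)*(1+w)*(2*N)"
  define c2 where "c2 = (2/N)*(M^3/w^2)*(1+w)*(8*N) + 1/w"
  define \<gamma> where "\<gamma> = (2/N)*(M^3/w^2)*(1+w)*(20/N + 10*N/T) + 2/N^2 + 10*M/(N*w^2) + 2/(N^2*w)"
  define gx where "gx = (\<lambda>i::nat. fst f (real i / N))"
  define gy where "gy = (\<lambda>i::nat. snd f (real i / N))"
  have w0: "w > 0" using w by simp
  have el: "errj M T n w f j = c1 * (gy (Suc j) - gy j) + c2 * (gx (Suc j) - gx j) + \<gamma>" for j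
    unfolding errj_linear c1_def c2_def \<gamma>_def gx_def gy_def N_def by (simp add: add.commute)
  have "(\<Sum>j\<in>{k..<K}. errj M T n w f j) = c1 * (\<Sum>j\<in>{k..<K}. gy (Suc j) - gy j)
      + c2 * (\<Sum>j\<in>{k..<K}. gx (Suc j) - gx j) + real (K - k) * \<gamma>"
    unfolding el by (simp add: sum.distrib sum_distrib_left)
  also have "(\<Sum>j\<in>{k..<K}. gy (Suc j) - gy j) = gy K - gy k" by (rule sum_Suc_diff'[OF kK(1)])
  also have "(\<Sum>j\<in>{k..<K}. gx (Suc j) - gx j) = gx K - gx k" by (rule sum_Suc_diff'[OF kK(1)])
  finally have S: "(\<Sum>j\<in>{k..<K}. errj M T n w f j) = c1 * (gy K - gy k) + c2 * (gx K - gx k) + real (K - k) * \<gamma>" .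
  have Gb: "\<And>s. s \<in> {0..1} \<Longrightarrow> s / M \<le> fst f s \<and> fst f s \<le> M * s"
    "\<And>s. s \<in> {0..1} \<Longrightarrow> s / M \<le> snd f s \<and> snd f s \<le> M * s"
    using fX fY unfolding G_def by auto
  have KN: "real K / N \<in> {0..1}" "real k / N \<in> {0..1}" using kK N0 unfolding N_def by auto
  have M0: "M > 0" using M by simp
  have up: "gx K \<le> M" "gy K \<le> M"
  proof -
    have "M * (real K / N) \<le> M * 1" using KN M0 by (intro mult_left_mono) auto
    then show "gx K \<le> M" "gy K \<le> M" using Gb(1)[OF KN(1)] Gb(2)[OF KN(1)] unfolding gx_def gy_def by auto
  qed
  have lo: "gx k \<ge> 0" "gy k \<ge> 0"
  proof -
    have k0: "real k / N \<ge> 0" using KN by simp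
    have "real k / N / M \<ge> 0" by (rule divide_nonneg_pos[OF k0 M0])
    then show "gx k \<ge> 0" "gy k \<ge> 0" using Gb(1)[OF KN(2)] Gb(2)[OF KN(2)] unfolding gx_def gy_def by auto
  qed
  have c0: "c1 \<ge> 0" "c2 \<ge> 0" "\<gamma> \<ge> 0" unfolding c1_def c2_def \<gamma>_def using N0 w0 M T by auto
  have "c1 * (gy K - gy k) \<le> c1 * M" using c0 up lo by (intro mult_left_mono) auto
  moreover have "c2 * (gx K - gx k) \<le> c2 * M" using c0 up lo by (intro mult_left_mono) auto
  moreover have "real (K - k) * \<gamma> \<le> N * \<gamma>" using c0 kK unfolding N_def by (intro mult_right_mono) auto
  moreover have "c1 * M + c2 * M + N * \<gamma> \<le> 200*(M^4/w + M^3*N/sqrt T)"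
  proof -
    have "w^1 \<le> w^4" by (rule power_increasing) (use w in auto)
    then have "w \<le> w^4" by simp
    then have "N \<ge> w" unfolding N_def using w by simp
    then show ?thesis unfolding c1_def c2_def \<gamma>_def by (rule final_ineq[rotated 3]) (use M T w in auto)
  qed
  ultimately show ?thesis unfolding S N_def by linarith
qed




theorem proposition2p4:
  shows "\<exists>C::real. \<forall>(\<theta>::real) (M::real) (T::real) (n::nat) (f::path2) (k::nat).
    0 < \<theta> \<and> \<theta> \<le> 1 \<and> M > 1 \<and> T > 1 \<and> real n \<ge> 2 * M
    \<and> f \<in> (PL n \<inter> G M) \<times> (PL n \<inter> G M)
    \<and> \<lceil>sqrt (real n)\<rceil> \<le> int k \<and> int k \<le> \<lfloor>\<theta> * real n\<rfloor> - 1
    \<longrightarrow>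
    (\<Sum>j\<in>{k..<nat \<lfloor>\<theta> * real n\<rfloor>}. EplusX (Ij n j) (Gamma M T f n) T)
      \<ge> integral {real k / real n .. real_of_int \<lfloor>\<theta> * real n\<rfloor> / real n}
            (\<lambda>s. (sqrt (2 * RstarX (fst f s) (snd f s)) - sqrt (dX (fst f) s))^2)
        - C * (M^4 / real n powr (1/4) + M^3 * real n / sqrt T)"
proof -
  have key: "(\<Sum>j\<in>{k..<nat \<lfloor>\<theta> * real n\<rfloor>}. EplusX (Ij n j) (Gamma M T f n) T)
      \<ge> integral {real k / real n .. real_of_int \<lfloor>\<theta> * real n\<rfloor> / real n}
            (\<lambda>s. (sqrt (2 * RstarX (fst f s) (snd f s)) - sqrt (dX (fst f) s))^2)
        - 200 * (M^4 / real n powr (1/4) + M^3 * real n / sqrt T)"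
    if H: "0 < \<theta> \<and> \<theta> \<le> 1 \<and> M > 1 \<and> T > 1 \<and> real n \<ge> 2 * M
    \<and> f \<in> (PL n \<inter> G M) \<times> (PL n \<inter> G M)
    \<and> \<lceil>sqrt (real n)\<rceil> \<le> int k \<and> int k \<le> \<lfloor>\<theta> * real n\<rfloor> - 1"
    for \<theta> M T :: real and n :: nat and f :: path2 and k :: nat
  proof -
    have th: "0 < \<theta>" "\<theta> \<le> 1" and M: "M > 1" and T: "T > 1" and nM: "real n \<ge> 2 * M"
      and fm: "f \<in> (PL n \<inter> G M) \<times> (PL n \<inter> G M)"
      and ks: "\<lceil>sqrt (real n)\<rceil> \<le> int k" and kK0: "int k \<le> \<lfloor>\<theta> * real n\<rfloor> - 1"
      using H by auto
    have fX: "fst f \<in> PL n" "fst f \<in> G M" and fY: "snd f \<in> PL n" "snd f \<in> G M"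
      using fm by (auto simp: mem_Times_iff)
    define K where "K = nat \<lfloor>\<theta> * real n\<rfloor>"
    have n0: "real n > 0" using nM M by linarith
    have n1: "real n \<ge> 1" using nM M by linarith
    have flK: "real_of_int \<lfloor>\<theta> * real n\<rfloor> = real K" unfolding K_def using kK0 by simp
    have kK: "k < K" unfolding K_def using kK0 by linarith
    have Kn: "K \<le> n"
    proof -
      have "\<theta> * real n \<le> real n" using th n0 by simp
      then have "\<lfloor>\<theta> * real n\<rfloor> \<le> int n" by linarith
      then show ?thesis unfolding K_def by simp
    qed
    define w where "w = real n powr (1/4)"
    have w4: "w^4 = real n" unfolding w_def using n0 by (simp add: powr_power)
    have w1: "w \<ge> 1" unfolding w_def using n1 by (intro ge_one_powr_ge_zero) auto
    have w2: "w^2 = sqrt (real n)" unfolding w_def using n0 by (simp add: powr_power powr_half_sqrt[symmetric])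
    have sk: "sqrt (real n) \<le> real k"
    proof -
      have "sqrt (real n) \<le> real_of_int \<lceil>sqrt (real n)\<rceil>" by (rule le_of_int_ceiling)
      also have "\<dots> \<le> real k" using ks by linarith
      finally show ?thesis .
    qed
    define h where "h = (\<lambda>s. (sqrt (2 * RstarX (fst f s) (snd f s)) - sqrt (dX (fst f) s))^2)"
    define Es where "Es = (\<Sum>j\<in>{k..<K}. EplusX (Ij n j) (Gamma M T f n) T)"
    define Er where "Er = (\<Sum>j\<in>{k..<K}. errj M T n w f j)"
    define B where "B = 200 * (M^4 / w + M^3 * real n / sqrt T)"
    have Es0: "Es \<ge> 0" unfolding Es_def by (intro sum_nonneg) (simp add: EplusX_nonneg)
    have B0: "B \<ge> 0" unfolding B_def using M T n0 w1 by simp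
    have ErB: "Er \<le> B" unfolding Er_def B_def
      by (rule sum_err_bound[OF M T w1 w4 _ fX(2) fY(2)]) (use kK Kn n0 in auto)
    have "integral {real k / real n .. real K / real n} h - B \<le> Es"
    proof (cases "h integrable_on {real k / real n .. real K / real n}")
      case True
      have "integral {real k / real n .. real K / real n} h
          = (\<Sum>j\<in>{k..<K}. integral {real j / real n .. (real j + 1) / real n} h)"
        by (rule integral_split[OF True]) (use kK n0 in auto)
      also have "\<dots> \<le> (\<Sum>j\<in>{k..<K}. EplusX (Ij n j) (Gamma M T f n) T + errj M T n w f j)"
      proof (rule sum_mono)
        fix j assume j: "j \<in> {k..<K}"
        have sub: "Ij n j \<subseteq> {real k / real n .. real K / real n}"
          unfolding Ij_def using j n0 by (auto simp: divide_right_mono)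
        have hint: "h integrable_on Ij n j"
          using integrable_subinterval_real[OF True sub[unfolded Ij_def]] unfolding Ij_def .
        have jw: "w^2 \<le> real j" using w2 sk j by auto
        have jn: "j + 1 \<le> n" using j Kn by auto
        have "integral (Ij n j) h \<le> EplusX (Ij n j) (Gamma M T f n) T + errj M T n w f j"
          by (rule interval_bound[OF M T nM fX fY jn w4 w1 jw hint]) (simp add: h_def)
        then show "integral {real j / real n .. (real j + 1) / real n} h
            \<le> EplusX (Ij n j) (Gamma M T f n) T + errj M T n w f j" unfolding Ij_def .
      qed
      also have "\<dots> = Es + Er" unfolding Es_def Er_def by (rule sum.distrib)
      finally show ?thesis using ErB by linarith
    next
      case False
      then have "integral {real k / real n .. real K / real n} h = 0" by (rule not_integrable_integral)
      then show ?thesis using Es0 ErB B0 by linarith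
    qed
    then show ?thesis unfolding Es_def B_def h_def flK K_def w_def .
  qed
  show ?thesis
    by (rule exI[of _ 200], intro allI impI, rule key)
qed


end
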